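(* Let $n,m$ be non-negative integers, not both equal to $0$. Then \[\sum_{d=0}^{\min(n,m)}\frac{(-1)^d}{4^{\lfloor (n+m-2d)/2\rfloor}}\,\frac{n+m-2d}{n+m-d}\binom{n+m-d}{n-d,\,m-d,\,d}\binom{2\lfloor (n+m-2d)/2\rfloor}{\lfloor (n+m-2d)/2\rfloor}=\frac{1}{4^{\lfloor n/2\rfloor+\lfloor m/2\rfloor}}\binom{2\lfloor n/2\rfloor}{\lfloor n/2\rfloor}\binom{2\lfloor m/2\rfloor}{\lfloor m/2\rfloor}.\]
   Context: $\binom{s}{a,\,b,\,c}=\frac{s!}{a!\,b!\,c!}$ denotes the multinomial coefficient (with $a+b+c=s$). *)

theory Defs
  imports Complex_Main
begin

definition multinomial3 :: "nat \<Rightarrow> nat \<Rightarrow> nat \<Rightarrow> nat \<Rightarrow> real" where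
  "multinomial3 s a b c = fact s / (fact a * fact b * fact c)"

end

theory Submission imports Defs begin

definition cb :: "nat \<Rightarrow> real" where "cb j = real ((2 * j) choose j)"

definition cc :: "nat \<Rightarrow> real" where
  "cc k = cb (k div 2) / 4 ^ (k div 2)"

lemma b_fact: "cb j = fact (2*j) / (fact j * fact j)"
  by (simp add: cb_def binomial_fact mult_2)

lemma b_mul: "cb j * (fact j * fact j) = fact (2*j)"
  by (simp add: b_fact)

lemma b_step: "real (j+1) * cb (j+1) = 2 * (2 * real j + 1) * cb j"
proof -
  have e: "fact (2 * (j+1)) = (2 * real j + 2) * (2 * real j + 1) * (fact (2*j) :: real)"
    by (simp add: fact_Suc algebra_simps)
  have f: "fact (j+1) = (real j + 1) * (fact j :: real)" by simp
  have p: "(fact j :: real) > 0" by simp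
  have h1: "cb (j+1) * ((real j + 1) * fact j * ((real j + 1) * fact j)) = (2 * real j + 2) * (2 * real j + 1) * (cb j * (fact j * fact j))"
    unfolding b_mul f[symmetric] e[symmetric] by simp
  have q: "(real j + 1) * (fact j * fact j) \<noteq> 0" using p by (simp add: add_pos_pos)
  have "(real (j+1) * cb (j+1)) * ((real j + 1) * (fact j * fact j)) = (2 * (2 * real j + 1) * cb j) * ((real j + 1) * (fact j * fact j))"
    using h1 by (simp add: algebra_simps)
  then show ?thesis using q by (metis mult_right_cancel)
qed

lemma aux_even: "real (j + 1) * x = 2 * (2 * real j + 1) * y \<Longrightarrow> (p::real) > 0 \<Longrightarrow>
   (2 * real j + 2) * (x / (4 * p)) = y / p + 2 * real j * (y / p)"
  apply (simp add: field_simps)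
  apply (drule arg_cong[where f="\<lambda>z. 2*p*z"])
  by (simp add: algebra_simps)

lemma aux_odd: "real (j + 1) * x = 2 * (2 * real j + 1) * y \<Longrightarrow> (p::real) > 0 \<Longrightarrow>
   (2 * real j + 3) * (x / (4 * p)) = x / (4 * p) + (2 * real j + 1) * (y / p)"
  by (simp add: field_simps)

lemma cc_rec: "real (k+2) * cc (k+2) = cc (k+1) + real k * cc k"
proof (cases "even k")
  case True
  then obtain j where k: "k = 2*j" by blast
  have d1: "(k+2) div 2 = j+1" "(k+1) div 2 = j" "k div 2 = j" using k by auto
  have "real (k+2) = 2 * real j + 2" "real k = 2 * real j" "(4::real) ^ (j+1) = 4 * 4^j" using k by auto
  then show ?thesis unfolding cc_def d1 using aux_even[OF b_step[of j], of "4^j"] by (simp add: add.commute)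
next
  case False
  then obtain j where k: "k = 2*j+1" by (metis oddE)
  have d1: "(k+2) div 2 = j+1" "(k+1) div 2 = j+1" "k div 2 = j" using k by auto
  have "real (k+2) = 2 * real j + 3" "real k = 2 * real j + 1" "(4::real) ^ (j+1) = 4 * 4^j" using k by auto
  then show ?thesis unfolding cc_def d1 using aux_odd[OF b_step[of j], of "4^j"] by (simp add: add.commute)
qed


definition TT :: "nat \<Rightarrow> nat \<Rightarrow> nat \<Rightarrow> real" where
  "TT n m d = (if d \<le> n \<and> d \<le> m then (-1)^d * (real (n+m-2*d) / real (n+m-d))
      * multinomial3 (n+m-d) (n-d) (m-d) d else 0)"

lemma TT_R: "TT (d+a) (d+b) d = (-1)^d * (real (a+b) / real (a+b+d)) * (fact (a+b+d) / (fact a * fact b * fact d))"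
proof -
  have "d+a+(d+b) - 2*d = a+b" "d+a+(d+b) - d = a+b+d" by auto
  then show ?thesis unfolding TT_def multinomial3_def by (simp add: ac_simps)
qed

lemma TT_zero: "\<not> (d \<le> n \<and> d \<le> m) \<Longrightarrow> TT n m d = 0"
  unfolding TT_def by (rule if_not_P)

lemma ratid:
  fixes a b d F fa fb fd :: real
  assumes "a \<ge> 0" "b \<ge> 0" "d \<ge> 0" "F > 0" "fa > 0" "fb > 0" "fd > 0"
  shows "(a+d+2) * ((-1) * ((a+b+1)/(a+b+d+2)) * ((a+b+d+2)*F / (((a+1)*fa) * fb * ((d+1)*fd))))
       - (a+d) * (((a+b+1)/(a+b+d+1)) * (F / (fa * ((b+1)*fb) * fd)))
       = (a+b+1) * ((-1) * ((a+b)/(a+b+d+1)) * (F / (fa * fb * ((d+1)*fd)))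
                    - ((a+b+2)/(a+b+d+2)) * ((a+b+d+2)*F / (((a+1)*fa) * ((b+1)*fb) * fd)))" (is "?lhs = ?rhs")
proof -
  have core: "-(a+d+2)*(a+b+1)*(b+1)*(a+b+d+1) - (a+d)*(a+b+1)*(a+1)*(d+1) = (a+b+1)*(-(a+b)*(a+1)*(b+1) - (a+b+2)*(d+1)*(a+b+d+1))"
    by algebra
  have p: "a+1 \<noteq> 0" "b+1 \<noteq> 0" "d+1\<noteq>0" "a+b+d+1\<noteq>0" "a+b+d+2\<noteq>0" "fa \<noteq> 0" "fb \<noteq> 0" "fd \<noteq> 0" using assms by auto
  have L: "?lhs = (F / (fa*fb*fd)) * ((-(a+d+2)*(a+b+1)*(b+1)*(a+b+d+1) - (a+d)*(a+b+1)*(a+1)*(d+1)) / ((a+1)*(b+1)*(d+1)*(a+b+d+1)))"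
    using p by (simp add: divide_simps) (simp add: algebra_simps)
  have R: "?rhs = (F / (fa*fb*fd)) * ((a+b+1)*(-(a+b)*(a+1)*(b+1) - (a+b+2)*(d+1)*(a+b+d+1)) / ((a+1)*(b+1)*(d+1)*(a+b+d+1)))"
    using p by (simp add: divide_simps) (simp add: algebra_simps)
  show ?thesis unfolding L R core ..
qed


lemma fs: "fact (Suc k) = (real k + 1) * (fact k :: real)"
  by (simp add: fact_Suc)

lemma sgn_lift: "p*x1 - q*x2 = r*(x3 - x4) \<Longrightarrow> p*((s::real)*x1) - q*(s*x2) = r*(s*x3 - s*x4)"
proof -
  assume h: "p*x1 - q*x2 = r*(x3 - x4)"
  have "p*(s*x1) - q*(s*x2) = s*(p*x1 - q*x2)" by (simp add: algebra_simps)
  also have "\<dots> = s*(r*(x3-x4))" using h by simp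
  also have "\<dots> = r*(s*x3 - s*x4)" by (simp add: algebra_simps)
  finally show ?thesis .
qed

lemma TT_case1:
  assumes n: "n = d+1+a" and m: "m = d+1+b"
  shows "real (n+1) * TT (n+1) m (d+1) - (real n - 1) * TT (n-1) m d
   = (real n + real m - 1 - 2 * real d) * (TT n m (d+1) - TT n m d)"
proof -
  define A where "A = real a"
  define B where "B = real b"
  define D where "D = real d"
  define F where "F = (fact (a+b+d+1) :: real)"
  have e1: "TT (n+1) m (d+1) = TT ((d+1)+(a+1)) ((d+1)+b) (d+1)"
     "TT (n-1) m d = TT (d+a) (d+(b+1)) d"
     "TT n m (d+1) = TT ((d+1)+a) ((d+1)+b) (d+1)"
     "TT n m d = TT (d+(a+1)) (d+(b+1)) d" unfolding n m by (simp_all add: ac_simps)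
  have f1: "fact (a + 1 + b + (d + 1)) = (A+B+D+2) * F"
  proof -
    have "a + 1 + b + (d + 1) = Suc (a+b+d+1)" by simp
    then have "fact (a + 1 + b + (d + 1)) = (real (a+b+d+1) + 1) * F" unfolding F_def using fs by metis
    also have "real (a+b+d+1) + 1 = A+B+D+2" by (simp add: A_def B_def D_def)
    finally show ?thesis .
  qed
  have f2: "fact (a + (b + 1) + d) = F" "fact (a + b + (d+1)) = F" unfolding F_def by (simp_all add: ac_simps)
  have f3: "fact (a + 1 + (b + 1) + d) = (A+B+D+2) * F"
  proof -
    have "a + 1 + (b + 1) + d = Suc (a+b+d+1)" by simp
    then have "fact (a + 1 + (b + 1) + d) = (real (a+b+d+1) + 1) * F" unfolding F_def using fs by metis
    also have "real (a+b+d+1) + 1 = A+B+D+2" by (simp add: A_def B_def D_def)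
    finally show ?thesis .
  qed
  have t1: "TT (n+1) m (d+1) = (-1)^d * ((-1) * ((A+B+1)/(A+B+D+2)) * ((A+B+D+2)*F / (((A+1)*fact a) * fact b * ((D+1)*fact d))))"
    unfolding e1 TT_R f1 by (simp add: A_def B_def D_def add.commute add.left_commute, (simp add: minus_divide_left algebra_simps)?)
  have t2: "TT (n-1) m d = (-1)^d * (((A+B+1)/(A+B+D+1)) * (F / (fact a * ((B+1)*fact b) * fact d)))"
    unfolding e1 TT_R f2 by (simp add: A_def B_def D_def add.commute add.left_commute, (simp add: minus_divide_left algebra_simps)?)
  have t3: "TT n m (d+1) = (-1)^d * ((-1) * ((A+B)/(A+B+D+1)) * (F / (fact a * fact b * ((D+1)*fact d))))"
    unfolding e1 TT_R f2 by (simp add: A_def B_def D_def add.commute add.left_commute, (simp add: minus_divide_left algebra_simps)?)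
  have t4: "TT n m d = (-1)^d * (((A+B+2)/(A+B+D+2)) * ((A+B+D+2)*F / (((A+1)*fact a) * ((B+1)*fact b) * fact d)))"
    unfolding e1 TT_R f3 by (simp add: A_def B_def D_def add.commute add.left_commute, (simp add: minus_divide_left algebra_simps)?)
  have r: "real (n+1) = A+D+2" "real n - 1 = A+D" "real n + real m - 1 - 2 * real d = A+B+1" unfolding A_def B_def D_def n m by auto
  have "A \<ge> 0" "B \<ge> 0" "D \<ge> 0" "F > 0" unfolding A_def B_def D_def F_def by auto
  from sgn_lift[OF ratid[OF this fact_gt_zero fact_gt_zero fact_gt_zero, of a b d]]
  show ?thesis unfolding t1 t2 t3 t4 r .
qed


lemma L1: "(q::real) \<noteq> 0 \<Longrightarrow> q*(s*(x/q)*(y/z)) = s*x*y/z"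
  by simp

lemma L2: "(q::real) \<noteq> 0 \<Longrightarrow> r \<noteq> 0 \<Longrightarrow> r*(s*(x/q)*(q*G/(u*(r*v)))) = s*x*G/(u*v)"
  by (simp add: divide_simps)

lemma L3: "(q::real) \<noteq> 0 \<Longrightarrow> r \<noteq> 0 \<Longrightarrow> s*(r/q)*(q*G/((r*u)*v)) = s*G/(u*v)"
  by (simp add: divide_simps)

lemma TT_case2:
  assumes n1: "n \<ge> 1" and m: "m = n+1+b"
  shows "real (n+1) * TT (n+1) m (n+1) - (real n - 1) * TT (n-1) m n
   = (real n + real m - 1 - 2 * real n) * (TT n m (n+1) - TT n m n)"
proof -
  define N where "N = real n"
  define Bv where "Bv = real b"
  define G where "G = (fact (n+b) :: real)"
  have z: "TT (n-1) m n = 0" "TT n m (n+1) = 0" using n1 by (auto intro: TT_zero)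
  have e1: "TT (n+1) m (n+1) = TT ((n+1)+0) ((n+1)+b) (n+1)"
     "TT n m n = TT (n+0) (n+(b+1)) n" unfolding m by (simp_all add: ac_simps)
  have g1: "fact (b + n + 1) = (N+Bv+1) * G" unfolding G_def N_def Bv_def
    by (metis add.commute add_Suc_right fs of_nat_add Suc_eq_plus1)
  have g2: "fact (b + 1 + n) = (N+Bv+1) * G" using g1 by (simp add: ac_simps)
  have p: "N + Bv + 1 \<noteq> 0" "N + 1 \<noteq> 0" "Bv + 1 \<noteq> 0" "fact n \<noteq> (0::real)" "fact b \<noteq> (0::real)"
    unfolding N_def Bv_def by auto
  have t1a: "TT (n+1) m (n+1) = (-1)^(n+1) * (Bv / (N+Bv+1)) * ((N+Bv+1) * G / (fact b * ((N+1) * fact n)))"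
    unfolding e1 TT_R using p
    by (simp add: g1 N_def Bv_def G_def ac_simps)
  have "real (n+1) * TT (n+1) m (n+1) = (N+1) * ((-1)^(n+1) * (Bv / (N+Bv+1)) * ((N+Bv+1) * G / (fact b * ((N+1) * fact n))))"
    using N_def by (simp only: t1a of_nat_add of_nat_1)
  also have "\<dots> = (-1)^(n+1) * Bv * G / (fact b * fact n)" by (rule L2[OF p(1) p(2)])
  also have "\<dots> = - ((-1)^n * Bv * G / (fact b * fact n))" by simp
  finally have t1: "real (n+1) * TT (n+1) m (n+1) = - ((-1)^n * Bv * G / (fact b * fact n))" .
  have "TT n m n = (-1)^n * ((Bv+1)/(N+Bv+1)) * ((N+Bv+1)*G/(((Bv+1)*fact b)*fact n))"
    unfolding e1 TT_R by (simp add: g2 Bv_def N_def G_def ac_simps)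
  also have "\<dots> = (-1)^n * G / (fact b * fact n)" by (rule L3[OF p(1) p(3)])
  finally have t4: "TT n m n = (-1)^n * G / (fact b * fact n)" .
  have r: "real n + real m - 1 - 2 * real n = Bv" unfolding m Bv_def by simp
  show ?thesis unfolding z t1 t4 r by (simp add: algebra_simps)
qed

lemma TT_case3:
  assumes n: "n = m+1+a"
  shows "real (n+1) * TT (n+1) m (m+1) - (real n - 1) * TT (n-1) m m
   = (real n + real m - 1 - 2 * real m) * (TT n m (m+1) - TT n m m)"
proof -
  define M where "M = real m"
  define A where "A = real a"
  define G where "G = (fact (a+m) :: real)"
  have z: "TT (n+1) m (m+1) = 0" "TT n m (m+1) = 0" by (auto intro: TT_zero)
  have e1: "TT (n-1) m m = TT (m+a) (m+0) m"
     "TT n m m = TT (m+(a+1)) (m+0) m" unfolding n by (simp_all add: ac_simps)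
  have g1: "fact (a + 1 + m) = (M+A+1) * G" unfolding G_def M_def A_def
    by (metis add.commute add_Suc_right fs of_nat_add Suc_eq_plus1 add.left_commute)
  have p: "M + A + 1 \<noteq> 0" "A + 1 \<noteq> 0" "M + A \<noteq> 0 \<or> A = 0" "fact a \<noteq> (0::real)" "fact m \<noteq> (0::real)"
    unfolding M_def A_def by auto
  have t2a: "TT (n-1) m m = (-1)^m * (A / (A+M)) * (G / (fact a * fact m))"
    unfolding e1 TT_R by (simp add: A_def M_def G_def)
  have t2: "(real n - 1) * TT (n-1) m m = (-1)^m * A * G / (fact a * fact m)"
  proof (cases "A + M = 0")
    case True
    then have "A = 0" unfolding A_def M_def by simp
    then show ?thesis unfolding t2a by simp
  next
    case False
    have "real n - 1 = A + M" unfolding n A_def M_def by simp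
    then show ?thesis unfolding t2a using L1[OF False] by simp
  qed
  have "TT n m m = (-1)^m * ((A+1)/(M+A+1)) * ((M+A+1)*G/(((A+1)*fact a)*fact m))"
    unfolding e1 TT_R by (simp add: g1 A_def M_def G_def ac_simps)
  also have "\<dots> = (-1)^m * G / (fact a * fact m)" by (rule L3[OF p(1) p(2)])
  finally have t4: "TT n m m = (-1)^m * G / (fact a * fact m)" .
  have r: "real n + real m - 1 - 2 * real m = A" unfolding n A_def by simp
  show ?thesis unfolding z t2 t4 r by (simp add: algebra_simps)
qed


lemma TT_diag: "TT n n n = 0"
  unfolding TT_def by simp

lemma TT_id:
  assumes n1: "n \<ge> 1"
  shows "real (n+1) * TT (n+1) m (d+1) - (real n - 1) * TT (n-1) m d
   = (real n + real m - 1 - 2 * real d) * (TT n m (d+1) - TT n m d)"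
proof -
  consider (c1) "d+1 \<le> n \<and> d+1 \<le> m" | (c2) "d = n \<and> d+1 \<le> m" | (c3) "d = m \<and> d+1 \<le> n"
    | (c4) "d = n \<and> d = m" | (c5) "d > n \<or> d > m" by linarith
  then show ?thesis
  proof cases
    case c1
    then show ?thesis using TT_case1[of n d "n-d-1" m "m-d-1"] by simp
  next
    case c2
    then show ?thesis using TT_case2[OF n1, of m "m-n-1"] by simp
  next
    case c3
    then show ?thesis using TT_case3[of n m "n-m-1"] by simp
  next
    case c4
    have "TT (n-1) m n = 0" by (rule TT_zero) (use n1 in linarith)
    then have "m = n" "d = n" and "TT (n-1) n n = 0" using c4 by auto
    then show ?thesis using TT_diag[of n] by (simp add: TT_zero)
  next
    case c5
    have "TT (n+1) m (d+1) = 0" "TT (n-1) m d = 0" "TT n m (d+1) = 0" "TT n m d = 0"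
      by (rule TT_zero, use c5 in linarith)+
    then show ?thesis by simp
  qed
qed

lemma TT_0: "n + m \<ge> 1 \<Longrightarrow> TT n m 0 = fact (n+m) / (fact n * fact m)"
  unfolding TT_def multinomial3_def by simp

lemma L4: "(r::real) \<noteq> 0 \<Longrightarrow> r*(x*F/((r*u)*v)) = x*(F/(u*v))"
  by (simp add: divide_simps)

lemma TT0_id:
  assumes n1: "n \<ge> 1"
  shows "real (n+1) * TT (n+1) m 0 = (real n + real m + 1) * TT n m 0"
proof -
  have a1: "n+m \<ge> 1" "n+1+m \<ge> 1" using n1 by auto
  have "fact (n+1+m) = (real n + real m + 1) * (fact (n+m) :: real)"
    using fs[of "n+m"] by (simp add: ac_simps)
  moreover have "fact (n+1) = (real n + 1) * (fact n :: real)" using fs[of n] by simp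
  ultimately have "TT (n+1) m 0 = (real n + real m + 1) * fact (n+m) / (((real n + 1) * fact n) * fact m)"
    unfolding TT_0[OF a1(2)] by (simp add: ac_simps)
  moreover have r1: "real (n+1) = real n + 1" by simp
  ultimately have "real (n+1) * TT (n+1) m 0 = (real n + 1) * ((real n + real m + 1) * fact (n+m) / (((real n + 1) * fact n) * fact m))"
    by (simp only:)
  also have "\<dots> = (real n + real m + 1) * (fact (n+m) / (fact n * fact m))"
    by (rule L4) simp
  finally have "real (n+1) * TT (n+1) m 0 = (real n + real m + 1) * (fact (n+m) / (fact n * fact m))" .
  then show ?thesis unfolding TT_0[OF a1(1)] .
qed


definition LL :: "nat \<Rightarrow> nat \<Rightarrow> real" where
  "LL n m = (\<Sum>d = 0..min n m. TT n m d * cc (n+m-2*d))"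

lemma LL_ext:
  assumes "min n m < K"
  shows "LL n m = (\<Sum>d<K. TT n m d * cc (n+m-2*d))"
  unfolding LL_def
proof (rule sum.mono_neutral_left)
  show "finite {..<K}" by simp
  show "{0..min n m} \<subseteq> {..<K}" using assms by auto
  show "\<forall>i\<in>{..<K} - {0..min n m}. TT n m i * cc (n + m - 2 * i) = 0"
    by (auto intro!: TT_zero)
qed

lemma LL_rec:
  assumes n1: "n \<ge> 1"
  shows "real (n+1) * LL (n+1) m - (real n - 1) * LL (n-1) m = LL n m"
proof -
  define K where "K = n+m+2"
  define U where "U e = (real n + real m + 1 - 2 * real e) * TT n m e * cc (n+m+1-2*e)" for e
  define V where "V d = (real n + real m - 1 - 2 * real d) * TT n m d * cc (n+m-1-2*d)" for d
  have A: "real (n+1) * (TT (n+1) m (Suc d) * cc (n+1+m-2*Suc d)) - (real n - 1) * (TT (n-1) m d * cc (n-1+m-2*d))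
           = U (Suc d) - V d" for d
  proof -
    have e: "n+1+m-2*Suc d = n+m-1-2*d" "n-1+m-2*d = n+m-1-2*d" "n+m+1-2*Suc d = n+m-1-2*d"
      using n1 by auto
    have r: "real n + real m + 1 - 2 * real (Suc d) = real n + real m - 1 - 2 * real d" by simp
    have "real (n+1) * (TT (n+1) m (Suc d) * cc (n+1+m-2*Suc d)) - (real n - 1) * (TT (n-1) m d * cc (n-1+m-2*d))
        = (real (n+1) * TT (n+1) m (d+1) - (real n - 1) * TT (n-1) m d) * cc (n+m-1-2*d)"
      unfolding e by (simp add: algebra_simps)
    also have "\<dots> = ((real n + real m - 1 - 2 * real d) * (TT n m (d+1) - TT n m d)) * cc (n+m-1-2*d)"
      using TT_id[OF n1, of m d] by simp
    also have "\<dots> = U (Suc d) - V d" unfolding U_def V_def e r by (simp add: algebra_simps)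
    finally show ?thesis .
  qed
  have B: "real (n+1) * (TT (n+1) m 0 * cc (n+1+m-2*0)) = U 0"
    unfolding U_def using TT0_id[OF n1, of m] by (simp add: ac_simps)
  have C: "U d - V d = TT n m d * cc (n+m-2*d)" for d
  proof (cases "d \<le> n \<and> d \<le> m")
    case False
    then show ?thesis unfolding U_def V_def by (simp add: TT_zero)
  next
    case True
    show ?thesis
    proof (cases "n+m = 2*d")
      case True
      then have "TT n m d = 0" unfolding TT_def by simp
      then show ?thesis unfolding U_def V_def by simp
    next
      case False
      define j where "j = n+m-2*d-1"
      have j: "n+m+1-2*d = j+2" "n+m-2*d = j+1" "n+m-1-2*d = j"
        "real n + real m + 1 - 2 * real d = real (j+2)" "real n + real m - 1 - 2 * real d = real j"
        using True False unfolding j_def by auto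
      have h: "real (j+2) * cc (j+2) - real j * cc j = cc (j+1)" using cc_rec[of j] by simp
      have "real (j+2) * TT n m d * cc (j+2) - real j * TT n m d * cc j = TT n m d * (real (j+2) * cc (j+2) - real j * cc j)"
        by (simp add: algebra_simps)
      then show ?thesis unfolding U_def V_def j h .
    qed
  qed
  have D: "U K = 0" unfolding U_def K_def by (simp add: TT_zero)
  have ext1: "LL (n+1) m = (\<Sum>d<Suc K. TT (n+1) m d * cc (n+1+m-2*d))" by (rule LL_ext) (simp add: K_def)
  have ext2: "LL (n-1) m = (\<Sum>d<K. TT (n-1) m d * cc (n-1+m-2*d))" by (rule LL_ext) (simp add: K_def)
  have ext3: "LL n m = (\<Sum>d<K. TT n m d * cc (n+m-2*d))" by (rule LL_ext) (simp add: K_def)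
  have "real (n+1) * LL (n+1) m = (\<Sum>e<Suc K. real (n+1) * (TT (n+1) m e * cc (n+1+m-2*e)))"
    unfolding ext1 by (rule sum_distrib_left)
  also have "\<dots> = real (n+1) * (TT (n+1) m 0 * cc (n+1+m-2*0)) + (\<Sum>d<K. real (n+1) * (TT (n+1) m (Suc d) * cc (n+1+m-2*Suc d)))"
    by (rule sum.lessThan_Suc_shift)
  finally have P1: "real (n+1) * LL (n+1) m = U 0 + (\<Sum>d<K. real (n+1) * (TT (n+1) m (Suc d) * cc (n+1+m-2*Suc d)))"
    unfolding B .
  have P2: "(real n - 1) * LL (n-1) m = (\<Sum>d<K. (real n - 1) * (TT (n-1) m d * cc (n-1+m-2*d)))"
    unfolding ext2 by (rule sum_distrib_left)
  have "real (n+1) * LL (n+1) m - (real n - 1) * LL (n-1) m = U 0 + (\<Sum>d<K. U (Suc d) - V d)"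
    unfolding P1 P2 A[symmetric] by (simp add: sum_subtractf)
  also have "\<dots> = (\<Sum>e<Suc K. U e) - (\<Sum>d<K. V d)"
    using sum.lessThan_Suc_shift[of U K] by (simp add: sum_subtractf del: sum.lessThan_Suc)
  also have "\<dots> = (\<Sum>d<K. U d - V d)"
    by (simp add: sum_subtractf D)
  also have "\<dots> = LL n m"
    unfolding C ext3 ..
  finally show ?thesis .
qed


lemma cc0: "cc 0 = 1" and cc1: "cc 1 = 1" unfolding cc_def cb_def by simp_all

lemma LL0: "m \<ge> 1 \<Longrightarrow> LL 0 m = cc 0 * cc m"
  unfolding LL_def TT_def multinomial3_def cc0 by simp

lemma LL1: "LL 1 m = cc 1 * cc m"
proof (cases m)
  case 0
  then show ?thesis unfolding LL_def TT_def multinomial3_def using cc0 cc1 by simp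
next
  case (Suc k)
  have t0: "TT 1 m 0 = real k + 2"
  proof -
    have "TT 1 m 0 = (real (k+2) / real (k+2)) * (fact (k+2) / (fact 1 * fact (k+1) * fact 0))"
      unfolding TT_def multinomial3_def Suc by simp
    also have "\<dots> = real k + 2" using fs[of "k+1"] by simp
    finally show ?thesis .
  qed
  have t1: "TT 1 m 1 = - real k"
  proof -
    have "TT 1 m 1 = - ((real k / real (k+1)) * (fact (k+1) / (fact 0 * fact k * fact 1)))"
      unfolding TT_def multinomial3_def Suc by simp
    also have "\<dots> = - real k" using fs[of "k"] by simp
    finally show ?thesis .
  qed
  have "LL 1 m = TT 1 m 0 * cc (k+2) + TT 1 m 1 * cc k"
    unfolding LL_def Suc by (simp add: numeral_2_eq_2)
  also have "\<dots> = cc (k+1)" unfolding t0 t1 using cc_rec[of k] by (simp add: algebra_simps)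
  finally show ?thesis unfolding cc1 Suc by simp
qed

lemma LL_main: "\<not> (n = 0 \<and> m = 0) \<Longrightarrow> LL n m = cc n * cc m"
proof (induction n arbitrary: m rule: less_induct)
  case (less n)
  show ?case
  proof (cases "n \<le> 1")
    case True
    then consider "n = 0" | "n = 1" by linarith
    then show ?thesis
    proof cases
      case 1
      then show ?thesis using less.prems LL0 by simp
    next
      case 2
      then show ?thesis using LL1 by simp
    qed
  next
    case False
    then obtain k where k: "n = k+2" using that[of "n-2"] by simp
    have r: "real (k+1+1) * LL (k+1+1) m - (real (k+1) - 1) * LL (k+1-1) m = LL (k+1) m"
      by (rule LL_rec) simp
    have ih1: "LL (k+1) m = cc (k+1) * cc m" using less.IH[of "k+1" m] k by simp
    have ih0: "real k * LL k m = real k * (cc k * cc m)"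
    proof (cases "k = 0")
      case True then show ?thesis by simp
    next
      case False then show ?thesis using less.IH[of k m] k by simp
    qed
    have "real (k+2) * LL (k+2) m = cc (k+1) * cc m + real k * (cc k * cc m)"
      using r ih1 ih0 by (simp add: algebra_simps numeral_2_eq_2)
    also have "\<dots> = real (k+2) * cc (k+2) * cc m" using cc_rec[of k] by (simp add: algebra_simps)
    finally have "real (k+2) * LL (k+2) m = real (k+2) * (cc (k+2) * cc m)" by simp
    then show ?thesis unfolding k by simp
  qed
qed

theorem corollary4p1:
  fixes n m :: nat
  assumes "\<not> (n = 0 \<and> m = 0)"
  shows "(\<Sum>d = 0..min n m.
            (-1) ^ d / 4 ^ ((n + m - 2 * d) div 2)
            * (real (n + m - 2 * d) / real (n + m - d))
            * multinomial3 (n + m - d) (n - d) (m - d) d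
            * real ((2 * ((n + m - 2 * d) div 2)) choose ((n + m - 2 * d) div 2)))
         = 1 / 4 ^ (n div 2 + m div 2)
           * real ((2 * (n div 2)) choose (n div 2))
           * real ((2 * (m div 2)) choose (m div 2))"
proof -
  have "(\<Sum>d = 0..min n m.
            (-1) ^ d / 4 ^ ((n + m - 2 * d) div 2)
            * (real (n + m - 2 * d) / real (n + m - d))
            * multinomial3 (n + m - d) (n - d) (m - d) d
            * real ((2 * ((n + m - 2 * d) div 2)) choose ((n + m - 2 * d) div 2)))
        = LL n m"
    unfolding LL_def
  proof (rule sum.cong)
    fix d assume "d \<in> {0..min n m}"
    then have "d \<le> n \<and> d \<le> m" by simp
    then show "(-1) ^ d / 4 ^ ((n + m - 2 * d) div 2)
            * (real (n + m - 2 * d) / real (n + m - d))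
            * multinomial3 (n + m - d) (n - d) (m - d) d
            * real ((2 * ((n + m - 2 * d) div 2)) choose ((n + m - 2 * d) div 2)) = TT n m d * cc (n+m-2*d)"
      unfolding TT_def cc_def cb_def by simp
  qed simp
  also have "\<dots> = cc n * cc m" using LL_main[OF assms] .
  also have "\<dots> = 1 / 4 ^ (n div 2 + m div 2)
           * real ((2 * (n div 2)) choose (n div 2))
           * real ((2 * (m div 2)) choose (m div 2))"
    unfolding cc_def cb_def by (simp add: power_add)
  finally show ?thesis .
qed

end
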